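(* For all integers $n\ge1$ and $m\ge0$, $\operatorname{diam}(Y_{n,m})=\operatorname{ecc}_{Z_{n,m}}(0)$, where $0$ is the all-zero vertex of $Z_{n,m}$.
   Context: For integers $n\ge1$, $m\ge0$, the Yoke graph $Y_{n,m}$ is the simple graph whose vertices are the tuples $v=(v_0,\dots,v_{m+1})$ with $v_0,v_{m+1}\in\mathbb{Z}_n$, $v_1,\dots,v_m\in\{0,1\}$ and $\sum_{i=0}^{m+1}v_i\equiv0\pmod n$. The dYoke graph $Z_{n,m}$ is defined identically except that $v_1,\dots,v_m\in\{-1,0,1\}$. In both graphs, two vertices $u,v$ are adjacent iff there is $0\le i\le m$ with $u_j=v_j$ for all $j\notin\{i,i+1\}$ and either ($u_i=v_i+1$, $u_{i+1}=v_{i+1}-1$) or ($u_i=v_i-1$, $u_{i+1}=v_{i+1}+1$), with the bucket entries (indices $0$ and $m+1$) computed modulo $n$. $\operatorname{ecc}_G(x)$ is the maximum distance from $x$ to a vertex of $G$. *)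

theory Defs
  imports Main "HOL-Library.Extended_Nat"
begin

text \<open>Vertices are integer lists v = [v_0, ..., v_(m+1)] of length m+2.
  The bucket entries v_0 and v_(m+1) represent elements of Z_n by their
  canonical representatives in {0..<n}; the inner entries range over
  the given digit set D ({0,1} for Yoke, {-1,0,1} for dYoke).\<close>

definition yoke_verts :: "int set \<Rightarrow> nat \<Rightarrow> nat \<Rightarrow> int list set" where
  "yoke_verts D n m = {v. length v = m + 2
      \<and> 0 \<le> v ! 0 \<and> v ! 0 < int n
      \<and> 0 \<le> v ! (m+1) \<and> v ! (m+1) < int n
      \<and> (\<forall>i. 1 \<le> i \<and> i \<le> m \<longrightarrow> v ! i \<in> D)
      \<and> sum_list v mod int n = 0}"

definition coord_add :: "nat \<Rightarrow> nat \<Rightarrow> nat \<Rightarrow> int \<Rightarrow> int \<Rightarrow> int" where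
  "coord_add n m j x d = (if j = 0 \<or> j = m + 1 then (x + d) mod int n else x + d)"

definition yoke_adj :: "int set \<Rightarrow> nat \<Rightarrow> nat \<Rightarrow> int list \<Rightarrow> int list \<Rightarrow> bool" where
  "yoke_adj D n m u v \<longleftrightarrow> u \<in> yoke_verts D n m \<and> v \<in> yoke_verts D n m \<and> u \<noteq> v \<and>
     (\<exists>i \<le> m. (\<forall>j < m + 2. j \<noteq> i \<and> j \<noteq> i + 1 \<longrightarrow> u ! j = v ! j) \<and>
        (\<exists>d \<in> {1, -1}. u ! i = coord_add n m i (v ! i) d
                     \<and> u ! (i+1) = coord_add n m (i+1) (v ! (i+1)) (- d)))"

definition gdist :: "('a \<Rightarrow> 'a \<Rightarrow> bool) \<Rightarrow> 'a \<Rightarrow> 'a \<Rightarrow> enat" where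
  "gdist E u v = Inf {enat (length p - 1) | p. p \<noteq> [] \<and> hd p = u \<and> last p = v \<and> successively E p}"

definition ecc :: "'a set \<Rightarrow> ('a \<Rightarrow> 'a \<Rightarrow> bool) \<Rightarrow> 'a \<Rightarrow> enat" where
  "ecc V E x = Sup {gdist E x v | v. v \<in> V}"

definition diam :: "'a set \<Rightarrow> ('a \<Rightarrow> 'a \<Rightarrow> bool) \<Rightarrow> enat" where
  "diam V E = Sup {gdist E u v | u v. u \<in> V \<and> v \<in> V}"

abbreviation Yoke_V where "Yoke_V n m \<equiv> yoke_verts {0, 1} n m"
abbreviation Yoke_E where "Yoke_E n m \<equiv> yoke_adj {0, 1} n m"
abbreviation dYoke_V where "dYoke_V n m \<equiv> yoke_verts {-1, 0, 1} n m"
abbreviation dYoke_E where "dYoke_E n m \<equiv> yoke_adj {-1, 0, 1} n m"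

end

theory Submission
  imports Defs
begin

definition gf :: "nat \<Rightarrow> (nat \<Rightarrow> int) \<Rightarrow> nat \<Rightarrow> int" where
  "gf m f j = (if j = 0 then 0 else f (j - 1)) - (if j \<le> m then f j else 0)"

definition act :: "nat \<Rightarrow> nat \<Rightarrow> int list \<Rightarrow> (nat \<Rightarrow> int) \<Rightarrow> int list" where
  "act n m x f = map (\<lambda>j. coord_add n m j (x ! j) (gf m f j)) [0..<m+2]"

definition fsz :: "nat \<Rightarrow> (nat \<Rightarrow> int) \<Rightarrow> nat" where
  "fsz m f = (\<Sum>i\<le>m. nat \<bar>f i\<bar>)"

definition Dgood :: "int set \<Rightarrow> bool" where
  "Dgood D \<longleftrightarrow> (\<forall>a b c. a \<in> D \<longrightarrow> c \<in> D \<longrightarrow> a \<le> b \<longrightarrow> b \<le> c \<longrightarrow> b \<in> D)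
     \<and> (\<forall>x\<in>D. x + 1 \<notin> D \<longrightarrow> x - 1 \<in> D)"

lemma Dgood_Y: "Dgood {0,1}" unfolding Dgood_def by auto
lemma Dgood_Z: "Dgood {-1,0,1}" unfolding Dgood_def by auto

lemma coord_add_comp: "coord_add n m j (coord_add n m j x a) b = coord_add n m j x (a + b)"
  by (simp add: coord_add_def mod_add_left_eq add.assoc)

lemma gf_add: "gf m (\<lambda>i. f i + h i) j = gf m f j + gf m h j"
  by (simp add: gf_def)

lemma length_act[simp]: "length (act n m x f) = m + 2"
  by (simp add: act_def)

lemma nth_act: "j < m + 2 \<Longrightarrow> act n m x f ! j = coord_add n m j (x ! j) (gf m f j)"
  by (simp add: act_def del: upt_Suc)

lemma act_comp: "act n m (act n m x f) h = act n m x (\<lambda>i. f i + h i)"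
  by (rule nth_equalityI) (simp_all add: nth_act coord_add_comp gf_add)

lemma verts_len: "x \<in> yoke_verts D n m \<Longrightarrow> length x = m + 2"
  by (simp add: yoke_verts_def)

lemma coord_add_zero:
  assumes "x \<in> yoke_verts D n m" "j < m + 2"
  shows "coord_add n m j (x ! j) 0 = x ! j"
  using assms by (auto simp: coord_add_def yoke_verts_def)

lemma act_zero:
  assumes "x \<in> yoke_verts D n m" "\<forall>i\<le>m. f i = 0"
  shows "act n m x f = x"
proof (rule nth_equalityI)
  show "length (act n m x f) = length x" using verts_len[OF assms(1)] by simp
  fix j assume "j < length (act n m x f)"
  then have j: "j < m + 2" by simp
  have "gf m f j = 0" using j assms(2) by (auto simp: gf_def)
  then show "act n m x f ! j = x ! j" using j coord_add_zero[OF assms(1) j] by (simp add: nth_act)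
qed

lemma sum_mod_rel:
  fixes N :: int
  assumes "length z = k" "length x = k" "\<forall>j<k. z ! j mod N = (x ! j + c j) mod N"
  shows "sum_list z mod N = (sum_list x + (\<Sum>j<k. c j)) mod N"
proof -
  have "sum_list z mod N = (\<Sum>j<k. z ! j) mod N"
    using assms(1) by (simp add: sum_list_sum_nth atLeast0LessThan)
  also have "\<dots> = (\<Sum>j<k. z ! j mod N) mod N" by (simp add: mod_sum_eq)
  also have "\<dots> = (\<Sum>j<k. (x ! j + c j) mod N) mod N" using assms(3) by simp
  also have "\<dots> = (\<Sum>j<k. (x ! j + c j)) mod N" by (simp add: mod_sum_eq)
  also have "\<dots> = (sum_list x + (\<Sum>j<k. c j)) mod N"
    using assms(2) by (simp add: sum_list_sum_nth atLeast0LessThan sum.distrib)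
  finally show ?thesis .
qed


lemma gdist_refl: "gdist E x x = 0"
proof -
  have "enat (length [x] - 1) \<in> {enat (length p - 1) | p. p \<noteq> [] \<and> hd p = x \<and> last p = x \<and> successively E p}"
    by (rule CollectI, rule exI[of _ "[x]"]) simp
  then have "gdist E x x \<le> enat (length [x] - 1)" unfolding gdist_def by (rule Inf_lower)
  then show ?thesis by (simp add: zero_enat_def[symmetric])
qed

lemma gdist_le_path:
  assumes "p \<noteq> []" "hd p = x" "last p = y" "successively E p"
  shows "gdist E x y \<le> enat (length p - 1)"
proof -
  have "enat (length p - 1) \<in> {enat (length p - 1) | p. p \<noteq> [] \<and> hd p = x \<and> last p = y \<and> successively E p}"
    by (rule CollectI, rule exI[of _ p]) (simp add: assms)
  then show ?thesis unfolding gdist_def by (rule Inf_lower)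
qed

lemma gdist_attained:
  assumes "gdist E x y \<noteq> \<infinity>"
  shows "\<exists>p. p \<noteq> [] \<and> hd p = x \<and> last p = y \<and> successively E p \<and> gdist E x y = enat (length p - 1)"
proof -
  let ?S = "{enat (length p - 1) | p. p \<noteq> [] \<and> hd p = x \<and> last p = y \<and> successively E p}"
  have ne: "?S \<noteq> {}"
  proof
    have "Inf ?S \<noteq> \<infinity>" using assms unfolding gdist_def .
    moreover assume "?S = {}"
    ultimately show False by (metis Inf_empty top_enat_def)
  qed
  then obtain a where a: "a \<in> ?S" by blast
  have "(LEAST v. v \<in> ?S) \<in> ?S" by (rule LeastI[of "\<lambda>v. v \<in> ?S", OF a])
  then have "Inf ?S \<in> ?S" unfolding Inf_enat_def if_not_P[OF ne] .
  then show ?thesis unfolding gdist_def by blast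
qed

lemma gdist_step:
  assumes "E x z"
  shows "gdist E x y \<le> gdist E z y + 1"
proof (cases "gdist E z y = \<infinity>")
  case True then show ?thesis by simp
next
  case False
  then obtain p where p: "p \<noteq> []" "hd p = z" "last p = y" "successively E p" "gdist E z y = enat (length p - 1)"
    using gdist_attained[OF False] by (elim exE conjE) (rule that)
  have sx: "successively E (x # p)" using p(1,2,4) assms by (cases p) auto
  have "gdist E x y \<le> enat (length (x # p) - 1)"
    by (rule gdist_le_path[OF _ _ _ sx]) (use p(1,3) in auto)
  also have "\<dots> = gdist E z y + 1" unfolding p(5) using p(1) by (cases p) (auto simp: one_enat_def)
  finally show ?thesis .
qed


lemma coord_add_inv:
  assumes "y \<in> yoke_verts D n m" "j < m + 2" "x ! j = coord_add n m j (y ! j) a"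
  shows "y ! j = coord_add n m j (x ! j) (- a)"
  using assms coord_add_zero[OF assms(1,2)] by (simp add: coord_add_comp)

definition delta :: "nat \<Rightarrow> int \<Rightarrow> nat \<Rightarrow> int" where
  "delta i d = (\<lambda>k. if k = i then d else 0)"

lemma gf_delta: "i \<le> m \<Longrightarrow> gf m (delta i d) j = (if j = i + 1 then d else 0) - (if j = i then d else 0)"
  by (auto simp: gf_def delta_def)

lemma adj_verts: "yoke_adj D n m x y \<Longrightarrow> x \<in> yoke_verts D n m \<and> y \<in> yoke_verts D n m"
  by (simp add: yoke_adj_def)

lemma adj_act:
  assumes "yoke_adj D n m x y"
  shows "\<exists>i\<le>m. \<exists>d\<in>{1,-1}. y = act n m x (delta i d)"
proof -
  have xv: "x \<in> yoke_verts D n m" and yv: "y \<in> yoke_verts D n m" using adj_verts[OF assms] by auto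
  from assms obtain i d where i: "i \<le> m" and d: "d \<in> {1,-1}"
    and oth: "\<forall>j < m + 2. j \<noteq> i \<and> j \<noteq> i + 1 \<longrightarrow> x ! j = y ! j"
    and e1: "x ! i = coord_add n m i (y ! i) d"
    and e2: "x ! (i+1) = coord_add n m (i+1) (y ! (i+1)) (- d)"
    unfolding yoke_adj_def by blast
  have "y = act n m x (delta i d)"
  proof (rule nth_equalityI)
    show "length y = length (act n m x (delta i d))" using verts_len[OF yv] by simp
    fix j assume "j < length y"
    then have j: "j < m + 2" using verts_len[OF yv] by simp
    show "y ! j = act n m x (delta i d) ! j"
    proof -
      consider "j = i" | "j = i + 1" | "j \<noteq> i \<and> j \<noteq> i + 1" by blast
      then show ?thesis
      proof cases
        case 1 then show ?thesis using coord_add_inv[OF yv j, of x d] e1 i j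
          by (simp add: nth_act gf_delta)
      next
        case 2 then show ?thesis using coord_add_inv[OF yv j, of x "-d"] e2 i j
          by (simp add: nth_act gf_delta)
      next
        case 3 then show ?thesis using oth j i coord_add_zero[OF xv j]
          by (simp add: nth_act gf_delta)
      qed
    qed
  qed
  with i d show ?thesis by blast
qed

lemma fsz_delta: "i \<le> m \<Longrightarrow> d \<in> {1,-1} \<Longrightarrow> fsz m (delta i d) = 1"
proof -
  assume i: "i \<le> m" and d: "d \<in> {1,-1}"
  have "fsz m (delta i d) = (\<Sum>k\<le>m. if k = i then nat \<bar>d\<bar> else 0)"
    unfolding fsz_def delta_def by (intro sum.cong) auto
  also have "\<dots> = nat \<bar>d\<bar>" using i by (simp add: sum.delta)
  finally show ?thesis using d by auto
qed

lemma fsz_add: "fsz m (\<lambda>i. f i + h i) \<le> fsz m f + fsz m h"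
  unfolding fsz_def sum.distrib[symmetric] by (intro sum_mono) linarith

lemma path_flow:
  assumes "successively (yoke_adj D n m) p" "p \<noteq> []" "hd p = x" "x \<in> yoke_verts D n m"
  shows "\<exists>f. act n m x f = last p \<and> fsz m f \<le> length p - 1"
  using assms
proof (induction p arbitrary: x)
  case Nil then show ?case by simp
next
  case (Cons a p)
  show ?case
  proof (cases p)
    case Nil
    have "act n m x (\<lambda>_. 0) = x" by (rule act_zero[OF Cons.prems(4)]) simp
    then show ?thesis using Nil Cons.prems by (auto simp: fsz_def)
  next
    case (Cons y p')
    have adj: "yoke_adj D n m x y" and sp: "successively (yoke_adj D n m) p"
      using Cons.prems Cons by auto
    have yv: "y \<in> yoke_verts D n m" using adj_verts[OF adj] by simp
    obtain f where f: "act n m y f = last p" "fsz m f \<le> length p - 1"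
      using Cons.IH[OF sp _ _ yv] Cons by auto
    obtain i d where i: "i \<le> m" "d \<in> {1,-1}" "y = act n m x (delta i d)"
      using adj_act[OF adj] by blast
    have "act n m x (\<lambda>k. delta i d k + f k) = last (a # p)"
      using f(1) i(3) Cons by (simp add: act_comp)
    moreover have "fsz m (\<lambda>k. delta i d k + f k) \<le> length (a # p) - 1"
      using fsz_add[of m "delta i d" f] fsz_delta[OF i(1,2)] f(2) Cons by simp
    ultimately show ?thesis by blast
  qed
qed


lemma act_inner: "1 \<le> j \<Longrightarrow> j \<le> m \<Longrightarrow> act n m x f ! j = x ! j + f (j - 1) - f j"
  by (simp add: nth_act coord_add_def gf_def)

lemma verts_D: "v \<in> yoke_verts D n m \<Longrightarrow> 1 \<le> j \<Longrightarrow> j \<le> m \<Longrightarrow> v ! j \<in> D"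
  by (simp add: yoke_verts_def)

lemma exists_pos:
  assumes D: "Dgood D" and xv: "x \<in> yoke_verts D n m" and yv: "act n m x f \<in> yoke_verts D n m"
    and e: "e \<le> m" "f e > 0"
  shows "\<exists>i\<le>m. f i > 0 \<and> (i = 0 \<or> x ! i - 1 \<in> D) \<and> (i = m \<or> x ! (i+1) + 1 \<in> D)"
proof -
  have conv: "\<And>a b c. a \<in> D \<Longrightarrow> c \<in> D \<Longrightarrow> a \<le> b \<Longrightarrow> b \<le> c \<Longrightarrow> b \<in> D"
    and top: "\<And>x. x \<in> D \<Longrightarrow> x + 1 \<notin> D \<Longrightarrow> x - 1 \<in> D" using D unfolding Dgood_def by blast+
  let ?y = "act n m x f"
  have inn: "\<And>j. 1 \<le> j \<Longrightarrow> j \<le> m \<Longrightarrow> x ! j + f (j - 1) - f j \<in> D \<and> x ! j \<in> D"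
    using verts_D[OF yv] verts_D[OF xv] act_inner by metis
  define S where "S = {i. i \<le> m \<and> f i > 0 \<and> (i = 0 \<or> x ! i - 1 \<in> D)}"
  define e0 where "e0 = (LEAST e. e \<le> m \<and> 0 < f e)"
  have e0: "e0 \<le> m \<and> 0 < f e0" unfolding e0_def by (rule LeastI[of _ e]) (use e in auto)
  have "e0 \<in> S"
  proof (cases "e0 = 0")
    case True then show ?thesis using e0 by (simp add: S_def)
  next
    case False
    have "\<not> (e0 - 1 \<le> m \<and> 0 < f (e0 - 1))"
      unfolding e0_def by (rule not_less_Least) (use False e0_def in auto)
    then have "f (e0 - 1) \<le> 0" using e0 by auto
    moreover have "x ! e0 + f (e0 - 1) - f e0 \<in> D" "x ! e0 \<in> D" using inn[of e0] False e0 by auto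
    ultimately have "x ! e0 - 1 \<in> D" using conv[of "x ! e0 + f (e0 - 1) - f e0" "x ! e0" "x ! e0 - 1"] e0 by auto
    then show ?thesis using e0 by (simp add: S_def)
  qed
  have finS: "finite S" unfolding S_def by (rule finite_subset[of _ "{..m}"]) auto
  define i where "i = Max S"
  have iS: "i \<in> S" unfolding i_def using finS \<open>e0 \<in> S\<close> by (intro Max_in) auto
  have "i = m \<or> x ! (i+1) + 1 \<in> D"
  proof (rule ccontr)
    assume h: "\<not> (i = m \<or> x ! (i+1) + 1 \<in> D)"
    then have im: "i < m" using iS by (auto simp: S_def)
    have a: "x ! (i+1) + f i - f (i+1) \<in> D" "x ! (i+1) \<in> D" using inn[of "i+1"] im by auto
    have "x ! (i+1) - 1 \<in> D" using top[OF a(2)] h by auto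
    have "\<not> (x ! (i+1) + f i - f (i+1) > x ! (i+1))"
      using conv[OF a(2) a(1), of "x ! (i+1) + 1"] h by auto
    then have "f (i+1) > 0" using iS by (auto simp: S_def)
    then have "i + 1 \<in> S" using im \<open>x ! (i+1) - 1 \<in> D\<close> by (simp add: S_def)
    then have "i + 1 \<le> i" unfolding i_def by (rule Max_ge[OF finS])
    then show False by simp
  qed
  then show ?thesis using iS by (auto simp: S_def)
qed

lemma exists_neg:
  assumes D: "Dgood D" and xv: "x \<in> yoke_verts D n m" and yv: "act n m x f \<in> yoke_verts D n m"
    and e: "e \<le> m" "f e < 0"
  shows "\<exists>i\<le>m. f i < 0 \<and> (i = 0 \<or> x ! i + 1 \<in> D) \<and> (i = m \<or> x ! (i+1) - 1 \<in> D)"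
proof -
  have conv: "\<And>a b c. a \<in> D \<Longrightarrow> c \<in> D \<Longrightarrow> a \<le> b \<Longrightarrow> b \<le> c \<Longrightarrow> b \<in> D"
    and top: "\<And>x. x \<in> D \<Longrightarrow> x + 1 \<notin> D \<Longrightarrow> x - 1 \<in> D" using D unfolding Dgood_def by blast+
  let ?y = "act n m x f"
  have inn: "\<And>j. 1 \<le> j \<Longrightarrow> j \<le> m \<Longrightarrow> x ! j + f (j - 1) - f j \<in> D \<and> x ! j \<in> D"
    using verts_D[OF yv] verts_D[OF xv] act_inner by metis
  define S where "S = {i. i \<le> m \<and> f i < 0 \<and> (i = m \<or> x ! (i+1) - 1 \<in> D)}"
  define T where "T = {e. e \<le> m \<and> f e < 0}"
  have finT: "finite T" unfolding T_def by (rule finite_subset[of _ "{..m}"]) auto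
  define e0 where "e0 = Max T"
  have "e0 \<in> T" unfolding e0_def using finT e by (intro Max_in) (auto simp: T_def)
  then have e0: "e0 \<le> m \<and> f e0 < 0" by (simp add: T_def)
  have "e0 \<in> S"
  proof (cases "e0 = m")
    case True then show ?thesis using e0 by (simp add: S_def)
  next
    case False
    have "\<not> (f (e0 + 1) < 0)"
    proof
      assume "f (e0 + 1) < 0"
      then have "e0 + 1 \<in> T" using False e0 by (simp add: T_def)
      then have "e0 + 1 \<le> e0" unfolding e0_def by (rule Max_ge[OF finT])
      then show False by simp
    qed
    moreover have "x ! (e0+1) + f e0 - f (e0+1) \<in> D" "x ! (e0+1) \<in> D" using inn[of "e0+1"] False e0 by auto
    ultimately have "x ! (e0+1) - 1 \<in> D"
      using conv[of "x ! (e0+1) + f e0 - f (e0+1)" "x ! (e0+1)" "x ! (e0+1) - 1"] e0 by auto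
    then show ?thesis using e0 by (simp add: S_def)
  qed
  define i where "i = (LEAST i. i \<in> S)"
  have iS: "i \<in> S" unfolding i_def using \<open>e0 \<in> S\<close> by (rule LeastI)
  have "i = 0 \<or> x ! i + 1 \<in> D"
  proof (rule ccontr)
    assume h: "\<not> (i = 0 \<or> x ! i + 1 \<in> D)"
    have im: "i \<le> m" using iS by (auto simp: S_def)
    have a: "x ! i + f (i - 1) - f i \<in> D" "x ! i \<in> D" using inn[of i] im h by auto
    have xm: "x ! i - 1 \<in> D" using top[OF a(2)] h by auto
    have "\<not> (x ! i + f (i - 1) - f i > x ! i)"
      using conv[OF a(2) a(1), of "x ! i + 1"] h by auto
    then have "f (i - 1) < 0" using iS by (auto simp: S_def)
    then have "i - 1 \<in> S" using im xm h by (simp add: S_def)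
    then have "i \<le> i - 1" unfolding i_def by (rule Least_le)
    then show False using h by linarith
  qed
  then show ?thesis using iS by (auto simp: S_def)
qed


lemma step_move:
  assumes n: "n \<ge> 1" and xv: "x \<in> yoke_verts D n m" and i: "i \<le> m" and d: "d \<in> {1,-1}"
    and c1: "i = 0 \<or> x ! i - d \<in> D" and c2: "i = m \<or> x ! (i+1) + d \<in> D"
  shows "act n m x (delta i d) \<in> yoke_verts D n m \<and>
         (act n m x (delta i d) = x \<or> yoke_adj D n m x (act n m x (delta i d)))"
proof -
  let ?z = "act n m x (delta i d)"
  have lx: "length x = m + 2" using verts_len[OF xv] .
  have zb: "0 \<le> ?z ! j \<and> ?z ! j < int n" if "j = 0 \<or> j = m + 1" for j
    using that n by (auto simp: nth_act coord_add_def)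
  have zi: "?z ! j \<in> D" if "1 \<le> j" "j \<le> m" for j
  proof -
    have "?z ! j = x ! j + (if j = i + 1 then d else 0) - (if j = i then d else 0)"
      using that i by (auto simp: act_inner delta_def)
    then show ?thesis using that c1 c2 verts_D[OF xv that] by auto
  qed
  have sum0: "(\<Sum>j<m+2. gf m (delta i d) j) = 0"
    using i by (simp add: gf_delta sum.distrib sum_subtractf)
  have "sum_list ?z mod int n = (sum_list x + (\<Sum>j<m+2. gf m (delta i d) j)) mod int n"
    by (rule sum_mod_rel[OF _ lx]) (auto simp: nth_act coord_add_def)
  then have "sum_list ?z mod int n = 0" using xv sum0 by (simp add: yoke_verts_def)
  then have zv: "?z \<in> yoke_verts D n m"
    unfolding yoke_verts_def using zb zi by auto
  have "yoke_adj D n m x ?z" if ne: "?z \<noteq> x"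
    unfolding yoke_adj_def
  proof (intro conjI exI[of _ i] )
    show "x \<in> yoke_verts D n m" "?z \<in> yoke_verts D n m" "x \<noteq> ?z" "i \<le> m" using xv zv ne i by auto
    show "\<forall>j<m + 2. j \<noteq> i \<and> j \<noteq> i + 1 \<longrightarrow> x ! j = ?z ! j"
      using i coord_add_zero[OF xv] by (simp add: nth_act gf_delta)
    have "x ! i = coord_add n m i (?z ! i) d"
      using i coord_add_zero[OF xv, of i] by (simp add: nth_act gf_delta coord_add_comp)
    moreover have "x ! (i+1) = coord_add n m (i+1) (?z ! (i+1)) (- d)"
      using i coord_add_zero[OF xv, of "i+1"] by (simp add: nth_act gf_delta coord_add_comp)
    ultimately show "\<exists>d\<in>{1, - 1}. x ! i = coord_add n m i (?z ! i) d \<and>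
        x ! (i + 1) = coord_add n m (i + 1) (?z ! (i + 1)) (- d)" using d by blast
  qed
  then show ?thesis using zv by blast
qed

lemma fsz_zero: "fsz m f = 0 \<Longrightarrow> \<forall>i\<le>m. f i = 0"
  unfolding fsz_def by auto

lemma fsz_dec:
  assumes i: "i \<le> m" and d: "d \<in> {1,-1}" and s: "d * f i > 0"
  shows "fsz m (\<lambda>k. f k - delta i d k) + 1 = fsz m f"
proof -
  have pt: "nat \<bar>f k\<bar> = nat \<bar>f k - delta i d k\<bar> + (if k = i then 1 else 0)" for k
    using d s by (auto simp: delta_def)
  have "fsz m f = (\<Sum>k\<le>m. nat \<bar>f k - delta i d k\<bar> + (if k = i then 1 else 0))"
    unfolding fsz_def using pt by simp
  also have "\<dots> = fsz m (\<lambda>k. f k - delta i d k) + 1"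
    unfolding fsz_def sum.distrib using i by simp
  finally show ?thesis by simp
qed

lemma greedy:
  assumes D: "Dgood D" and n: "n \<ge> 1"
  shows "x \<in> yoke_verts D n m \<Longrightarrow> act n m x f \<in> yoke_verts D n m \<Longrightarrow> fsz m f = N \<Longrightarrow>
         gdist (yoke_adj D n m) x (act n m x f) \<le> enat N"
proof (induction N arbitrary: x f)
  case 0
  then have "act n m x f = x" using act_zero fsz_zero by blast
  then show ?case by (simp add: gdist_refl)
next
  case (Suc N)
  obtain e where e: "e \<le> m" "f e \<noteq> 0"
  proof -
    have "\<not> (\<forall>e\<le>m. f e = 0)"
    proof
      assume "\<forall>e\<le>m. f e = 0"
      then have "fsz m f = 0" unfolding fsz_def by simp
      then show False using Suc.prems(3) by simp
    qed
    then show ?thesis using that by blast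
  qed
  obtain i d where i: "i \<le> m" and d: "d \<in> {1,-1}" and s: "d * f i > 0"
    and c1: "i = 0 \<or> x ! i - d \<in> D" and c2: "i = m \<or> x ! (i+1) + d \<in> D"
  proof (cases "f e > 0")
    case True
    then obtain i where "i \<le> m" "f i > 0" "i = 0 \<or> x ! i - 1 \<in> D" "i = m \<or> x ! (i+1) + 1 \<in> D"
      using exists_pos[OF D Suc.prems(1,2) e(1)] by blast
    then show ?thesis using that[of i 1] by auto
  next
    case False
    then have "f e < 0" using e by simp
    then obtain i where "i \<le> m" "f i < 0" "i = 0 \<or> x ! i + 1 \<in> D" "i = m \<or> x ! (i+1) - 1 \<in> D"
      using exists_neg[OF D Suc.prems(1,2) e(1)] by blast
    then show ?thesis using that[of i "-1"] by (auto simp: mult_neg_neg)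
  qed
  define z where "z = act n m x (delta i d)"
  define f' where "f' = (\<lambda>k. f k - delta i d k)"
  have zs: "z \<in> yoke_verts D n m" "z = x \<or> yoke_adj D n m x z"
    using step_move[OF n Suc.prems(1) i d c1 c2] unfolding z_def by auto
  have af: "act n m z f' = act n m x f"
    unfolding z_def f'_def act_comp by simp
  have fs: "fsz m f' = N" using fsz_dec[of i m d f, OF i d s] Suc.prems(3) unfolding f'_def by simp
  have ih: "gdist (yoke_adj D n m) z (act n m x f) \<le> enat N"
    using Suc.IH[OF zs(1) _ fs] af Suc.prems(2) by simp
  show ?case
  proof (cases "z = x")
    case True then show ?thesis using ih by (simp add: eSuc_enat[symmetric] order_trans[OF _ ile_eSuc])
  next
    case False
    then have "yoke_adj D n m x z" using zs by simp
    then have "gdist (yoke_adj D n m) x (act n m x f) \<le> gdist (yoke_adj D n m) z (act n m x f) + 1"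
      by (rule gdist_step)
    also have "\<dots> \<le> enat N + 1" using ih by (simp add: add_right_mono)
    finally show ?thesis by (simp add: one_enat_def)
  qed
qed


definition wdiff :: "nat \<Rightarrow> nat \<Rightarrow> int list \<Rightarrow> int list \<Rightarrow> int list" where
  "wdiff n m u v = map (\<lambda>j. coord_add n m j (v ! j - u ! j) 0) [0..<m+2]"

lemma length_wdiff[simp]: "length (wdiff n m u v) = m + 2" by (simp add: wdiff_def)

lemma nth_wdiff: "j < m + 2 \<Longrightarrow> wdiff n m u v ! j = coord_add n m j (v ! j - u ! j) 0"
  by (simp add: wdiff_def del: upt_Suc)

lemma mod_shift_iff:
  fixes N u a v :: int
  assumes "0 \<le> v" "v < N"
  shows "((u + a) mod N = v) \<longleftrightarrow> (a mod N = (v - u) mod N)"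
proof -
  have "((u + a) mod N = v) \<longleftrightarrow> ((u + a) mod N = v mod N)" using assms by simp
  also have "\<dots> \<longleftrightarrow> N dvd (u + a) - v" by (rule mod_eq_dvd_iff)
  also have "\<dots> \<longleftrightarrow> N dvd a - (v - u)" by (simp add: algebra_simps)
  also have "\<dots> \<longleftrightarrow> (a mod N = (v - u) mod N)" by (rule mod_eq_dvd_iff[symmetric])
  finally show ?thesis .
qed

lemma shift_iff:
  assumes uv: "u \<in> yoke_verts D n m" and vv: "v \<in> yoke_verts D' n m"
    and z: "\<forall>j<m+2. z ! j = 0"
  shows "act n m u f = v \<longleftrightarrow> act n m z f = wdiff n m u v"
proof -
  have lv: "length v = m + 2" using verts_len[OF vv] .
  have c: "(coord_add n m j (u ! j) a = v ! j) \<longleftrightarrow> (coord_add n m j 0 a = coord_add n m j (v ! j - u ! j) 0)"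
    if j: "j < m + 2" for j a
  proof (cases "j = 0 \<or> j = m + 1")
    case True
    then have "0 \<le> v ! j \<and> v ! j < int n" using vv by (auto simp: yoke_verts_def)
    then show ?thesis using True mod_shift_iff[of "v ! j" "int n" "u ! j" a] by (simp add: coord_add_def)
  next
    case False then show ?thesis by (auto simp: coord_add_def)
  qed
  show ?thesis
    unfolding list_eq_iff_nth_eq using lv c z by (auto simp: nth_act nth_wdiff)
qed

lemma zero_vert: "n \<ge> 1 \<Longrightarrow> replicate (m+2) 0 \<in> yoke_verts {-1,0,1} n m"
  by (auto simp: yoke_verts_def sum_list_replicate simp del: replicate.simps replicate_Suc)

lemma zero_nth: "\<forall>j<m+2. replicate (m+2) (0::int) ! j = 0"
  by (simp del: replicate.simps replicate_Suc)

lemma wdiff_vert: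
  assumes n: "n \<ge> 1" and uv: "u \<in> Yoke_V n m" and vv: "v \<in> Yoke_V n m"
  shows "wdiff n m u v \<in> dYoke_V n m"
proof -
  have lu: "length u = m + 2" and lv: "length v = m + 2" using verts_len uv vv by auto
  have b: "0 \<le> wdiff n m u v ! j \<and> wdiff n m u v ! j < int n" if "j = 0 \<or> j = m + 1" for j
    using that n by (auto simp: nth_wdiff coord_add_def)
  have i: "wdiff n m u v ! j \<in> {-1,0,1}" if "1 \<le> j" "j \<le> m" for j
    using that verts_D[OF uv that] verts_D[OF vv that] by (auto simp: nth_wdiff coord_add_def)
  have "sum_list (wdiff n m u v) mod int n = (sum_list v + (\<Sum>j<m+2. - (u ! j))) mod int n"
    by (rule sum_mod_rel[OF _ lv]) (auto simp: nth_wdiff coord_add_def)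
  also have "(\<Sum>j<m+2. - (u ! j)) = - sum_list u"
    using lu by (simp add: sum_list_sum_nth atLeast0LessThan sum_negf)
  finally have "sum_list (wdiff n m u v) mod int n = (sum_list v - sum_list u) mod int n" by simp
  also have "\<dots> = (sum_list v mod int n - sum_list u mod int n) mod int n" by (simp add: mod_diff_eq)
  also have "\<dots> = 0" using uv vv by (simp add: yoke_verts_def)
  finally show ?thesis using b i unfolding yoke_verts_def by auto
qed

lemma partB:
  assumes n: "n \<ge> 1" and uv: "u \<in> Yoke_V n m" and vv: "v \<in> Yoke_V n m"
  shows "gdist (Yoke_E n m) u v \<le> gdist (dYoke_E n m) (replicate (m+2) 0) (wdiff n m u v)"
proof (cases "gdist (dYoke_E n m) (replicate (m+2) 0) (wdiff n m u v) = \<infinity>")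
  case True then show ?thesis by simp
next
  case False
  then obtain p where p: "p \<noteq> []" "hd p = replicate (m+2) 0" "last p = wdiff n m u v"
      "successively (dYoke_E n m) p"
      "gdist (dYoke_E n m) (replicate (m+2) 0) (wdiff n m u v) = enat (length p - 1)"
    using gdist_attained[OF False] by (elim exE conjE) (rule that)
  obtain f where f: "act n m (replicate (m+2) 0) f = wdiff n m u v" "fsz m f \<le> length p - 1"
    using path_flow[OF p(4,1,2) zero_vert[OF n]] p(3) by auto
  have "act n m u f = v" using shift_iff[OF uv vv zero_nth] f(1) by simp
  then have "gdist (Yoke_E n m) u v \<le> enat (fsz m f)"
    using greedy[OF Dgood_Y n uv] vv by metis
  also have "\<dots> \<le> enat (length p - 1)" using f(2) by simp
  finally show ?thesis using p(5) by simp
qed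


lemma partA:
  assumes n: "n \<ge> 1" and wv: "w \<in> dYoke_V n m"
  shows "\<exists>u\<in>Yoke_V n m. \<exists>v\<in>Yoke_V n m.
           gdist (dYoke_E n m) (replicate (m+2) 0) w \<le> gdist (Yoke_E n m) u v"
proof -
  have lw: "length w = m + 2" using verts_len[OF wv] .
  define u' where "u' = map (\<lambda>j. if j = 0 \<or> j = m + 1 then 0 else (if w ! j = -1 then 1 else (0::int))) [0..<m+2]"
  define u where "u = map (\<lambda>j. if j = 0 then (- sum_list u') mod int n else u' ! j) [0..<m+2]"
  define v where "v = map (\<lambda>j. coord_add n m j (u ! j) (w ! j)) [0..<m+2]"
  have lu': "length u' = m + 2" and lu: "length u = m + 2" and lv: "length v = m + 2"
    by (simp_all add: u'_def u_def v_def)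
  have u'n: "j < m + 2 \<Longrightarrow> u' ! j = (if j = 0 \<or> j = m + 1 then 0 else (if w ! j = -1 then 1 else 0))" for j
    unfolding u'_def by (simp del: upt_Suc)
  have un: "j < m + 2 \<Longrightarrow> u ! j = (if j = 0 then (- sum_list u') mod int n else u' ! j)" for j
    unfolding u_def by (simp del: upt_Suc)
  have vn: "j < m + 2 \<Longrightarrow> v ! j = coord_add n m j (u ! j) (w ! j)" for j
    unfolding v_def by (simp del: upt_Suc)
  have "sum_list u mod int n = (sum_list u' + (\<Sum>j<m+2. if j = 0 then - sum_list u' else 0)) mod int n"
    by (rule sum_mod_rel[OF lu lu']) (auto simp: un u'n)
  then have su: "sum_list u mod int n = 0" by simp
  have uv: "u \<in> Yoke_V n m"
    unfolding yoke_verts_def using lu su n by (auto simp: un u'n)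
  have "sum_list v mod int n = (sum_list u + (\<Sum>j<m+2. w ! j)) mod int n"
    by (rule sum_mod_rel[OF lv lu]) (auto simp: vn coord_add_def)
  also have "(\<Sum>j<m+2. w ! j) = sum_list w" using lw by (simp add: sum_list_sum_nth atLeast0LessThan)
  finally have "sum_list v mod int n = (sum_list u mod int n + sum_list w mod int n) mod int n"
    by (simp add: mod_add_eq)
  then have sv: "sum_list v mod int n = 0" using su wv by (simp add: yoke_verts_def)
  have wi: "w ! j \<in> {-1,0,1}" if "1 \<le> j" "j \<le> m" for j using verts_D[OF wv that] .
  have vv: "v \<in> Yoke_V n m"
    unfolding yoke_verts_def using lv sv n wi by (auto simp: vn un u'n coord_add_def)
  have wb: "0 \<le> w ! j \<and> w ! j < int n" if "j = 0 \<or> j = m + 1" for j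
    using wv that by (auto simp: yoke_verts_def)
  have wd: "wdiff n m u v = w"
  proof (rule nth_equalityI)
    show "length (wdiff n m u v) = length w" using lw by simp
    fix j assume "j < length (wdiff n m u v)"
    then have j: "j < m + 2" by simp
    show "wdiff n m u v ! j = w ! j"
    proof (cases "j = 0 \<or> j = m + 1")
      case True
      then have "wdiff n m u v ! j = ((u ! j + w ! j) mod int n - u ! j) mod int n"
        using j by (simp add: nth_wdiff vn coord_add_def)
      also have "\<dots> = w ! j" using wb[OF True] by (simp add: mod_diff_left_eq)
      finally show ?thesis .
    next
      case False then show ?thesis using j by (simp add: nth_wdiff vn coord_add_def)
    qed
  qed
  have "gdist (dYoke_E n m) (replicate (m+2) 0) w \<le> gdist (Yoke_E n m) u v"
  proof (cases "gdist (Yoke_E n m) u v = \<infinity>")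
    case True then show ?thesis by simp
  next
    case False
    then obtain p where p: "p \<noteq> []" "hd p = u" "last p = v" "successively (Yoke_E n m) p"
        "gdist (Yoke_E n m) u v = enat (length p - 1)"
      using gdist_attained[OF False] by (elim exE conjE) (rule that)
    obtain f where f: "act n m u f = v" "fsz m f \<le> length p - 1"
      using path_flow[OF p(4,1,2) uv] p(3) by auto
    have a0: "act n m (replicate (m+2) 0) f = w" using shift_iff[OF uv vv zero_nth] f(1) wd by simp
    then have "gdist (dYoke_E n m) (replicate (m+2) 0) w \<le> enat (fsz m f)"
      using greedy[OF Dgood_Z n zero_vert[OF n]] wv by metis
    also have "\<dots> \<le> enat (length p - 1)" using f(2) by simp
    finally show ?thesis using p(5) by simp
  qed
  then show ?thesis using uv vv by blast
qed

theorem theorem5p22: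
  fixes n m :: nat
  assumes "n \<ge> 1"
  shows "diam (Yoke_V n m) (Yoke_E n m) = ecc (dYoke_V n m) (dYoke_E n m) (replicate (m + 2) 0)"
proof (rule antisym)
  show "diam (Yoke_V n m) (Yoke_E n m) \<le> ecc (dYoke_V n m) (dYoke_E n m) (replicate (m + 2) 0)"
    unfolding diam_def
  proof (rule Sup_least)
    fix x assume "x \<in> {gdist (Yoke_E n m) u v |u v. u \<in> Yoke_V n m \<and> v \<in> Yoke_V n m}"
    then obtain u v where x: "x = gdist (Yoke_E n m) u v" and uv: "u \<in> Yoke_V n m" "v \<in> Yoke_V n m" by blast
    have "x \<le> gdist (dYoke_E n m) (replicate (m+2) 0) (wdiff n m u v)"
      using partB[OF assms uv] x by simp
    also have "\<dots> \<le> ecc (dYoke_V n m) (dYoke_E n m) (replicate (m + 2) 0)"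
      unfolding ecc_def using wdiff_vert[OF assms uv] by (intro Sup_upper) blast
    finally show "x \<le> ecc (dYoke_V n m) (dYoke_E n m) (replicate (m + 2) 0)" .
  qed
  show "ecc (dYoke_V n m) (dYoke_E n m) (replicate (m + 2) 0) \<le> diam (Yoke_V n m) (Yoke_E n m)"
    unfolding ecc_def
  proof (rule Sup_least)
    fix x assume "x \<in> {gdist (dYoke_E n m) (replicate (m + 2) 0) v |v. v \<in> dYoke_V n m}"
    then obtain w where x: "x = gdist (dYoke_E n m) (replicate (m + 2) 0) w" and wv: "w \<in> dYoke_V n m" by blast
    obtain u v where uv: "u \<in> Yoke_V n m" "v \<in> Yoke_V n m"
      and le: "gdist (dYoke_E n m) (replicate (m+2) 0) w \<le> gdist (Yoke_E n m) u v"
      using partA[OF assms wv] by blast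
    have "gdist (Yoke_E n m) u v \<le> diam (Yoke_V n m) (Yoke_E n m)"
      unfolding diam_def using uv by (intro Sup_upper) blast
    then show "x \<le> diam (Yoke_V n m) (Yoke_E n m)" using x le by simp
  qed
qed

end
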